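(* Let $d=d_1+\dots+d_l$, ${\bf L}=\mathrm{Diag}({\bf L}_1,\dots,{\bf L}_l)$ with ${\bf L}_i\in\mathbb{S}^{d_i}_{++}$, and $q_1,\dots,q_l\in(0,1]$. Let ${\bf T}=\mathrm{Diag}({\bf T}_1,\dots,{\bf T}_l)$ with ${\bf T}_i=\frac{\eta_i}{q_i}{\bf I}_{d_i}$, $\eta_i\sim\mathrm{Bernoulli}(q_i)$. Let ${\bf D}:=(\mathbb{E}[{\bf T}{\bf L}{\bf T}])^{-1}$ (the optimal stepsize for det-CGD2), and for a constant $C_0>0$ (standing for $2(f(x^0)-f^{\inf})/\varepsilon^2$) define the communication complexity $\mathcal{C}(q):=\big(\sum_{i=1}^lq_id_i\big)\cdot\frac{C_0}{\det({\bf D})^{1/d}}$. Then $$\mathcal C(q)=C_0\Big(\sum_{i=1}^lq_id_i\Big)\prod_{i=1}^l\Big(\frac1{q_i}\Big)^{d_i/d}\det({\bf L})^{1/d}.$$ Moreover, $\mathcal C$ is minimized over $q\in(0,1]^l$ when all $q_i$ are equal, and the minimum value is $C_0\, d\,\det({\bf L})^{1/d}$.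
   Context: $\mathrm{Diag}(\cdot)$ denotes a block-diagonal matrix; $\mathbb{S}^{m}_{++}$: symmetric positive definite $m\times m$ matrices. Motivation: for det-CGD2, $x^{k+1}=x^k-{\bf T}^k{\bf D}\nabla f(x^k)$ with i.i.d. unbiased sketches ${\bf T}^k$, reaching $\frac1K\sum_k\mathbb{E}\|\nabla f(x^k)\|^2_{{\bf D}/\det({\bf D})^{1/d}}\le\varepsilon^2$ takes $K\ge 2(f(x^0)-f^{\inf})/(\varepsilon^2\det({\bf D})^{1/d})$ iterations, each sending $\sum_iq_id_i$ coordinates in expectation; $\mathcal C(q)$ is the product. *)

theory Defs
  imports "HOL-Analysis.Analysis" "HOL-Probability.Probability"
begin

text \<open>Coordinates of R^d are indexed by the finite type 'n; blocks by the finite type 'k.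
  The map b assigns each coordinate to its block, so block i has dimension
  d_i = card {j. b j = i}.\<close>

definition blk_dim :: "('n::finite \<Rightarrow> 'k::finite) \<Rightarrow> 'k \<Rightarrow> nat" where
  "blk_dim b i = card {j. b j = i}"

definition block_diag :: "('n::finite \<Rightarrow> 'k::finite) \<Rightarrow> real^'n^'n \<Rightarrow> bool" where
  "block_diag b L \<longleftrightarrow> (\<forall>j k. b j \<noteq> b k \<longrightarrow> L $ j $ k = 0)"

definition block_pd :: "('n::finite \<Rightarrow> 'k::finite) \<Rightarrow> real^'n^'n \<Rightarrow> 'k \<Rightarrow> bool" where
  "block_pd b L i \<longleftrightarrow>
     (\<forall>j k. b j = i \<longrightarrow> b k = i \<longrightarrow> L $ j $ k = L $ k $ j) \<and>
     (\<forall>x::real^'n. (\<forall>j. b j \<noteq> i \<longrightarrow> x $ j = 0) \<longrightarrow> x \<noteq> 0 \<longrightarrow> x \<bullet> (L *v x) > 0)"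

definition sketch :: "('n::finite \<Rightarrow> 'k::finite) \<Rightarrow> ('k \<Rightarrow> real) \<Rightarrow> ('k \<Rightarrow> bool) \<Rightarrow> real^'n^'n" where
  "sketch b q \<eta> = (\<chi> j k. if j = k then (if \<eta> (b j) then 1 / q (b j) else 0) else 0)"

definition eta_law :: "('k::finite \<Rightarrow> real) \<Rightarrow> ('k \<Rightarrow> bool) pmf" where
  "eta_law q = Pi_pmf UNIV False (\<lambda>i. bernoulli_pmf (q i))"

definition ETLT :: "('n::finite \<Rightarrow> 'k::finite) \<Rightarrow> ('k \<Rightarrow> real) \<Rightarrow> real^'n^'n \<Rightarrow> real^'n^'n" where
  "ETLT b q L = (\<chi> j k. measure_pmf.expectation (eta_law q)
      (\<lambda>\<eta>. (sketch b q \<eta> ** L ** sketch b q \<eta>) $ j $ k))"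

definition stepD :: "('n::finite \<Rightarrow> 'k::finite) \<Rightarrow> ('k \<Rightarrow> real) \<Rightarrow> real^'n^'n \<Rightarrow> real^'n^'n" where
  "stepD b q L = matrix_inv (ETLT b q L)"

definition comm_cx :: "real \<Rightarrow> ('n::finite \<Rightarrow> 'k::finite) \<Rightarrow> real^'n^'n \<Rightarrow> ('k \<Rightarrow> real) \<Rightarrow> real" where
  "comm_cx C0 b L q = (\<Sum>i\<in>UNIV. q i * real (blk_dim b i)) *
      (C0 / (det (stepD b q L) powr (1 / real CARD('n))))"

end

theory Submission
  imports Defs
begin


lemma marg: "map_pmf (\<lambda>\<eta>. \<eta> i) (eta_law q) = bernoulli_pmf (q i)"
  unfolding eta_law_def by (subst Pi_pmf_component) auto

lemma diag_left: "((\<chi> j k. if j = k then f j else 0) ** (A::real^'n::finite^'n)) $ j $ k = f j * A $ j $ k"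
proof -
  have "((\<chi> j k. if j = k then f j else 0) ** A) $ j $ k = (\<Sum>l\<in>UNIV. (if j = l then f j else 0) * A $ l $ k)"
    unfolding matrix_matrix_mult_def by simp
  also have "\<dots> = (\<Sum>l\<in>UNIV. if j = l then f j * A $ l $ k else 0)"
    by (rule sum.cong) auto
  also have "\<dots> = f j * A $ j $ k" by simp
  finally show ?thesis .
qed

lemma diag_right: "((A::real^'n::finite^'n) ** (\<chi> j k. if j = k then f j else 0)) $ j $ k = A $ j $ k * f k"
proof -
  have "(A ** (\<chi> j k. if j = k then f j else 0)) $ j $ k = (\<Sum>l\<in>UNIV. A $ j $ l * (if l = k then f l else 0))"
    unfolding matrix_matrix_mult_def by simp
  also have "\<dots> = (\<Sum>l\<in>UNIV. if l = k then A $ j $ k * f k else 0)"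
    by (rule sum.cong) auto
  also have "\<dots> = A $ j $ k * f k" by simp
  finally show ?thesis .
qed

lemma sketch_prod:
  fixes b :: "'n::finite \<Rightarrow> 'k::finite"
  shows "(sketch b q \<eta> ** L ** sketch b q \<eta>) $ j $ k =
    (if \<eta> (b j) then 1 / q (b j) else 0) * L $ j $ k * (if \<eta> (b k) then 1 / q (b k) else 0)"
  unfolding sketch_def diag_right diag_left ..

lemma ETLT_eq:
  fixes b :: "'n::finite \<Rightarrow> 'k::finite"
  assumes L_diag: "block_diag b L" and q: "\<And>i. 0 < q i \<and> q i \<le> 1"
  shows "ETLT b q L = (\<chi> j k. L $ j $ k / q (b j))"
proof -
  have "measure_pmf.expectation (eta_law q)
      (\<lambda>\<eta>. (sketch b q \<eta> ** L ** sketch b q \<eta>) $ j $ k) = L $ j $ k / q (b j)" for j k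
  proof (cases "b j = b k")
    case True
    have "measure_pmf.expectation (eta_law q)
      (\<lambda>\<eta>. (sketch b q \<eta> ** L ** sketch b q \<eta>) $ j $ k) =
      measure_pmf.expectation (map_pmf (\<lambda>\<eta>. \<eta> (b j)) (eta_law q))
        (\<lambda>x. (if x then 1 / q (b j) else 0) * L $ j $ k * (if x then 1 / q (b j) else 0))"
      by (simp only: sketch_prod integral_map_pmf True)
    also have "\<dots> = L $ j $ k / q (b j)"
      unfolding marg using q[of "b j"] by (simp add: field_simps power2_eq_square)
    finally show ?thesis .
  next
    case False
    then have "L $ j $ k = 0" using L_diag unfolding block_diag_def by blast
    then show ?thesis by (simp add: sketch_prod)
  qed
  note ee = this
  show ?thesis unfolding ETLT_def by (simp only: ee)
qed


lemma Q: "y \<bullet> (L *v y) = (\<Sum>j\<in>UNIV. \<Sum>k\<in>UNIV. y $ j * L $ j $ k * y $ k)" for y :: "real^'n::finite"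
    by (simp add: inner_vec_def matrix_vector_mult_def sum_distrib_left mult.assoc)

lemma quad_split:
  fixes b :: "'n::finite \<Rightarrow> 'k::finite" and L :: "real^'n^'n"
  assumes L_diag: "block_diag b L"
  shows "(\<Sum>i\<in>UNIV. (\<chi> j. if b j = i then x $ j else 0) \<bullet> (L *v (\<chi> j. if b j = i then x $ j else 0))) = x \<bullet> (L *v x)"
proof -
  have "(\<Sum>i\<in>UNIV. (\<chi> j. if b j = i then x $ j else 0) \<bullet> (L *v (\<chi> j. if b j = i then x $ j else 0))) =
      (\<Sum>i\<in>UNIV. \<Sum>j\<in>UNIV. \<Sum>k\<in>UNIV. if b j = i \<and> b k = i then x $ j * L $ j $ k * x $ k else 0)"
    unfolding Q by (intro sum.cong refl) simp
  also have "\<dots> = (\<Sum>j\<in>UNIV. \<Sum>i\<in>UNIV. \<Sum>k\<in>UNIV. if b j = i \<and> b k = i then x $ j * L $ j $ k * x $ k else 0)"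
    by (rule sum.swap)
  also have "\<dots> = (\<Sum>j\<in>UNIV. \<Sum>k\<in>UNIV. \<Sum>i\<in>UNIV. if b j = i \<and> b k = i then x $ j * L $ j $ k * x $ k else 0)"
    by (rule sum.cong[OF refl], rule sum.swap)
  also have "\<dots> = (\<Sum>j\<in>UNIV. \<Sum>k\<in>UNIV. x $ j * L $ j $ k * x $ k)"
  proof (intro sum.cong refl)
    fix j k
    have "(\<Sum>i\<in>UNIV. if b j = i \<and> b k = i then x $ j * L $ j $ k * x $ k else 0)
        = (\<Sum>i\<in>UNIV. if b j = i then (if b k = b j then x $ j * L $ j $ k * x $ k else 0) else 0)"
      by (intro sum.cong refl) auto
    also have "\<dots> = (if b k = b j then x $ j * L $ j $ k * x $ k else 0)"
      by simp
    also have "\<dots> = x $ j * L $ j $ k * x $ k"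
      using L_diag unfolding block_diag_def by auto
    finally show "(\<Sum>i\<in>UNIV. if b j = i \<and> b k = i then x $ j * L $ j $ k * x $ k else 0) = x $ j * L $ j $ k * x $ k" .
  qed
  also have "\<dots> = x \<bullet> (L *v x)" by (rule Q[symmetric])
  finally show ?thesis .
qed


lemma quad_pos:
  fixes b :: "'n::finite \<Rightarrow> 'k::finite" and L :: "real^'n^'n"
  assumes L_diag: "block_diag b L" and L_pd: "\<And>i. block_pd b L i" and x0: "x \<noteq> 0"
  shows "x \<bullet> (L *v x) > 0"
proof -
  define xi where "xi i = (\<chi> j. if b j = i then x $ j else 0)" for i
  have supp: "\<forall>j. b j \<noteq> i \<longrightarrow> xi i $ j = 0" for i unfolding xi_def by simp
  have pdi: "y \<noteq> 0 \<Longrightarrow> y \<bullet> (L *v y) > 0" if "\<forall>j. b j \<noteq> i \<longrightarrow> y $ j = 0" for y i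
    using L_pd[of i] that unfolding block_pd_def by blast
  have nn: "xi i \<bullet> (L *v xi i) \<ge> 0" for i
  proof (cases "xi i = 0")
    case True then show ?thesis by simp
  next
    case False
    then show ?thesis using pdi[OF supp[of i]] by (simp add: less_imp_le)
  qed
  obtain j0 where j0: "x $ j0 \<noteq> 0" using x0 by (metis vec_eq_iff zero_index)
  have "xi (b j0) $ j0 \<noteq> 0" using j0 unfolding xi_def by simp
  then have "xi (b j0) \<noteq> 0" by (metis zero_index)
  then have "xi (b j0) \<bullet> (L *v xi (b j0)) > 0"
    using pdi[OF supp[of "b j0"]] by blast
  then have "(\<Sum>i\<in>UNIV. xi i \<bullet> (L *v xi i)) > 0"
    by (intro sum_pos2[of UNIV "b j0"]) (auto intro: nn)
  then show ?thesis using quad_split[OF L_diag, of x] unfolding xi_def by simp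
qed

lemma scaleR_mv: "((c::real) *\<^sub>R (A::real^'n::finite^'m::finite)) *v x = c *\<^sub>R (A *v x)"
  by (simp add: vec_eq_iff matrix_vector_mult_def sum_distrib_left mult.assoc)

lemma det_pos_of_pd:
  fixes L :: "real^'n::finite^'n"
  assumes pd: "\<And>x. x \<noteq> 0 \<Longrightarrow> x \<bullet> (L *v x) > 0"
  shows "det L > 0"
proof -
  define M where "M t = t *\<^sub>R mat 1 + (1 - t) *\<^sub>R L" for t :: real
  have nz: "det (M t) \<noteq> 0" if t: "0 \<le> t" "t \<le> 1" for t
  proof -
    have "M t *v x = 0 \<longrightarrow> x = 0" for x
    proof (rule ccontr)
      assume "\<not> (M t *v x = 0 \<longrightarrow> x = 0)"
      then have x: "M t *v x = 0" "x \<noteq> 0" by auto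
      have "x \<bullet> (M t *v x) = t * (x \<bullet> x) + (1 - t) * (x \<bullet> (L *v x))"
        unfolding M_def by (simp add: matrix_vector_mult_add_rdistrib inner_add_right scaleR_mv)
      moreover have "t * (x \<bullet> x) + (1 - t) * (x \<bullet> (L *v x)) > 0"
      proof (cases "t = 1")
        case True then show ?thesis using x by simp
      next
        case False
        then have "(1 - t) * (x \<bullet> (L *v x)) > 0" using t pd[OF x(2)] by simp
        moreover have "t * (x \<bullet> x) \<ge> 0" using t by simp
        ultimately show ?thesis by linarith
      qed
      ultimately show False using x by simp
    qed
    then have "invertible (M t)"
      using invertible_left_inverse matrix_left_invertible_ker by blast
    then show ?thesis using invertible_det_nz by blast
  qed
  have cont: "isCont (\<lambda>t. det (M t)) t" for t
    unfolding M_def det_def by (intro continuous_intros) 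
  have M0: "M 0 = L" and M1: "M 1 = mat 1" unfolding M_def by auto
  show ?thesis
  proof (rule ccontr)
    assume "\<not> det L > 0"
    then have "det (M 0) \<le> 0" using M0 by simp
    moreover have "0 \<le> det (M 1)" using M1 by simp
    ultimately obtain t where "0 \<le> t" "t \<le> 1" "det (M t) = 0"
      using IVT[of "\<lambda>t. det (M t)" 0 0 1] cont by auto
    then show False using nz by blast
  qed
qed


lemma sum_blk_dim: "(\<Sum>i\<in>UNIV. real (blk_dim b i)) = real CARD('n)"
  for b :: "'n::finite \<Rightarrow> 'k::finite"
proof -
  have "(\<Sum>i\<in>(UNIV::'k set). \<Sum>j\<in>{j\<in>(UNIV::'n set). b j = i}. (1::real)) = (\<Sum>j\<in>(UNIV::'n set). 1)"
    by (rule sum.group) auto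
  then show ?thesis unfolding blk_dim_def by simp
qed

lemma prod_blk: "(\<Prod>j\<in>UNIV. f (b j)) = (\<Prod>i\<in>UNIV. (f i :: real) ^ blk_dim b i)"
  for b :: "'n::finite \<Rightarrow> 'k::finite"
proof -
  have "(\<Prod>i\<in>(UNIV::'k set). \<Prod>j\<in>{j\<in>(UNIV::'n set). b j = i}. f (b j)) = (\<Prod>j\<in>(UNIV::'n set). f (b j))"
    by (rule prod.group) auto
  moreover have "(\<Prod>j\<in>{j\<in>(UNIV::'n set). b j = i}. f (b j)) = f i ^ blk_dim b i" for i
  proof -
    have "(\<Prod>j\<in>{j\<in>(UNIV::'n set). b j = i}. f (b j)) = (\<Prod>j\<in>{j\<in>(UNIV::'n set). b j = i}. f i)"
      by (rule prod.cong) auto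
    then show ?thesis unfolding blk_dim_def by simp
  qed
  ultimately show ?thesis by simp
qed

lemma det_ETLT:
  fixes b :: "'n::finite \<Rightarrow> 'k::finite" and L :: "real^'n^'n"
  assumes L_diag: "block_diag b L" and q: "\<And>i. 0 < q i \<and> q i \<le> 1"
  shows "det (ETLT b q L) = (\<Prod>i\<in>UNIV. (1 / q i) ^ blk_dim b i) * det L"
proof -
  have "ETLT b q L = (\<chi> j k. if j = k then 1 / q (b j) else 0) ** L"
    unfolding ETLT_eq[OF L_diag q] by (simp add: vec_eq_iff diag_left)
  then have "det (ETLT b q L) = det ((\<chi> j k. if j = k then 1 / q (b j) else 0) :: real^'n^'n) * det L"
    by (simp add: det_mul)
  also have "det ((\<chi> j k. if j = k then 1 / q (b j) else 0) :: real^'n^'n) = (\<Prod>j\<in>UNIV. 1 / q (b j))"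
    by (subst det_diagonal) auto
  also have "\<dots> = (\<Prod>i\<in>UNIV. (1 / q i) ^ blk_dim b i)" by (rule prod_blk)
  finally show ?thesis .
qed

lemma det_inv: "det (A::real^'n::finite^'n) \<noteq> 0 \<Longrightarrow> det (matrix_inv A) = 1 / det A"
proof -
  assume "det A \<noteq> 0"
  then have "invertible A" using invertible_det_nz by blast
  then have "A ** matrix_inv A = mat 1" unfolding invertible_def matrix_inv_def
    by (metis (mono_tags, lifting) someI_ex)
  then have "det A * det (matrix_inv A) = 1" by (metis det_I det_mul)
  then show ?thesis using \<open>det A \<noteq> 0\<close> by (simp add: field_simps)
qed

lemma comm_formula:
  fixes b :: "'n::finite \<Rightarrow> 'k::finite" and L :: "real^'n^'n"
  assumes L_diag: "block_diag b L" and L_pd: "\<And>i. block_pd b L i"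
    and q: "\<And>i. 0 < q i \<and> q i \<le> 1"
  shows "comm_cx C0 b L q =
           C0 * (\<Sum>i\<in>UNIV. q i * real (blk_dim b i))
              * (\<Prod>i\<in>UNIV. (1 / q i) powr (real (blk_dim b i) / real CARD('n)))
              * det L powr (1 / real CARD('n))"
proof -
  define n where "n = real CARD('n)"
  define P where "P = (\<Prod>i\<in>UNIV. (1 / q i) ^ blk_dim b i)"
  have dL: "det L > 0" by (rule det_pos_of_pd) (rule quad_pos[OF L_diag L_pd])
  have P: "P > 0" unfolding P_def using q by (intro prod_pos) auto
  have dE: "det (ETLT b q L) = P * det L" unfolding P_def by (rule det_ETLT[OF L_diag q])
  have dD: "det (stepD b q L) = 1 / (P * det L)"
    unfolding stepD_def using dE P dL by (simp add: det_inv)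
  have "det (stepD b q L) powr (1 / n) = 1 / (P powr (1/n) * det L powr (1/n))"
    unfolding dD using P dL by (simp add: powr_divide powr_mult)
  moreover have "P powr (1/n) = (\<Prod>i\<in>UNIV. (1 / q i) powr (real (blk_dim b i) / n))"
  proof -
    have "P powr (1/n) = (\<Prod>i\<in>UNIV. ((1 / q i) ^ blk_dim b i) powr (1/n))"
      unfolding P_def by (rule prod_powr_distrib)
    also have "\<dots> = (\<Prod>i\<in>UNIV. (1 / q i) powr (real (blk_dim b i) / n))"
    proof (rule prod.cong[OF refl])
      fix i
      have "((1 / q i) ^ blk_dim b i) = (1 / q i) powr real (blk_dim b i)"
        using q[of i] by (simp add: powr_realpow)
      then show "((1 / q i) ^ blk_dim b i) powr (1/n) = (1 / q i) powr (real (blk_dim b i) / n)"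
        by (simp add: powr_powr)
    qed
    finally show ?thesis .
  qed
  ultimately show ?thesis unfolding comm_cx_def n_def[symmetric] by (simp add: field_simps)
qed


lemma wamgm:
  fixes x w :: "'k::finite \<Rightarrow> real"
  assumes x: "\<And>i. x i > 0" and w: "\<And>i. w i \<ge> 0" and ws: "(\<Sum>i\<in>UNIV. w i) = 1"
  shows "(\<Prod>i\<in>UNIV. x i powr w i) \<le> (\<Sum>i\<in>UNIV. w i * x i)"
proof -
  have "(\<Prod>i\<in>UNIV. x i powr w i) = (\<Prod>i\<in>UNIV. exp (w i * ln (x i)))"
  proof (rule prod.cong[OF refl])
    fix i
    have "x i \<noteq> 0" using x[of i] by simp
    then show "x i powr w i = exp (w i * ln (x i))" by (simp add: powr_def mult.commute)
  qed
  also have "\<dots> = exp (\<Sum>i\<in>UNIV. w i *\<^sub>R ln (x i))" by (simp add: exp_sum)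
  also have "\<dots> \<le> (\<Sum>i\<in>UNIV. w i * exp (ln (x i)))"
    by (rule convex_on_sum[where C=UNIV]) (auto simp: ws w exp_convex)
  also have "\<dots> = (\<Sum>i\<in>UNIV. w i * x i)" using x by simp
  finally show ?thesis .
qed

theorem corollary2:
  fixes b :: "'n::finite \<Rightarrow> 'k::finite"
    and L :: "real^'n^'n"
    and q :: "'k \<Rightarrow> real"
    and C0 :: real
  assumes blocks_nonempty: "surj b"
    and L_diag: "block_diag b L"
    and L_pd: "\<And>i. block_pd b L i"
    and q_range: "\<And>i. 0 < q i \<and> q i \<le> 1"
    and C0_pos: "C0 > 0"
  shows "(comm_cx C0 b L q =
           C0 * (\<Sum>i\<in>UNIV. q i * real (blk_dim b i))
              * (\<Prod>i\<in>UNIV. (1 / q i) powr (real (blk_dim b i) / real CARD('n)))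
              * det L powr (1 / real CARD('n))) \<and>
         (\<forall>c. 0 < c \<and> c \<le> 1 \<longrightarrow>
           comm_cx C0 b L (\<lambda>_. c) = C0 * real CARD('n) * det L powr (1 / real CARD('n))) \<and>
         (\<forall>q'. (\<forall>i. 0 < q' i \<and> q' i \<le> 1) \<longrightarrow>
           C0 * real CARD('n) * det L powr (1 / real CARD('n)) \<le> comm_cx C0 b L q')"
proof -
  define n where "n = real CARD('n)"
  have n0: "n > 0" unfolding n_def by simp
  have sd: "(\<Sum>i\<in>UNIV. real (blk_dim b i)) = n" unfolding n_def by (rule sum_blk_dim)
  have A: "comm_cx C0 b L q =
           C0 * (\<Sum>i\<in>UNIV. q i * real (blk_dim b i))
              * (\<Prod>i\<in>UNIV. (1 / q i) powr (real (blk_dim b i) / real CARD('n)))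
              * det L powr (1 / real CARD('n))"
    by (rule comm_formula[OF L_diag L_pd q_range])
  have B: "comm_cx C0 b L (\<lambda>_. c) = C0 * n * det L powr (1 / n)" if c: "0 < c" "c \<le> 1" for c
  proof -
    have "(\<Sum>i\<in>UNIV. c * real (blk_dim b i)) = c * n"
      using sd by (simp add: sum_distrib_left[symmetric])
    moreover have "(\<Prod>i\<in>UNIV. (1 / c) powr (real (blk_dim b i) / n)) = 1 / c"
    proof -
      have "(\<Prod>i\<in>UNIV. (1 / c) powr (real (blk_dim b i) / n)) = (1 / c) powr (\<Sum>i\<in>UNIV. real (blk_dim b i) / n)"
        using c by (simp add: powr_sum)
      also have "(\<Sum>i\<in>UNIV. real (blk_dim b i) / n) = 1"
        using sd n0 by (simp add: sum_divide_distrib[symmetric])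
      finally show ?thesis using c by simp
    qed
    ultimately show ?thesis
      using comm_formula[OF L_diag L_pd, of "\<lambda>_. c" C0] c unfolding n_def[symmetric] by simp
  qed
  have C: "C0 * n * det L powr (1 / n) \<le> comm_cx C0 b L q'" if q': "\<forall>i. 0 < q' i \<and> q' i \<le> 1" for q'
  proof -
    define S where "S = (\<Sum>i\<in>UNIV. q' i * real (blk_dim b i))"
    define G where "G = (\<Prod>i\<in>UNIV. q' i powr (real (blk_dim b i) / n))"
    have G0: "G > 0" unfolding G_def using q' by (intro prod_pos) (metis powr_gt_zero less_irrefl)
    have "G \<le> (\<Sum>i\<in>UNIV. (real (blk_dim b i) / n) * q' i)"
      unfolding G_def
    proof (rule wamgm)
      show "(\<Sum>i\<in>UNIV. real (blk_dim b i) / n) = 1"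
        using sd n0 by (simp add: sum_divide_distrib[symmetric])
    qed (use q' n0 in auto)
    also have "\<dots> = S / n" unfolding S_def by (simp add: sum_divide_distrib mult.commute)
    finally have GS: "n \<le> S / G" using G0 n0 by (simp add: field_simps)
    have P: "(\<Prod>i\<in>UNIV. (1 / q' i) powr (real (blk_dim b i) / n)) = 1 / G"
      proof -
      have nz: "q' i \<noteq> 0" for i using q' by (metis less_irrefl)
      show ?thesis unfolding G_def using nz by (simp add: powr_divide prod_dividef)
    qed
    have "comm_cx C0 b L q' = C0 * (S / G) * det L powr (1 / n)"
      using comm_formula[OF L_diag L_pd q'[rule_format], of C0] P unfolding n_def[symmetric] S_def by simp
    moreover have "C0 * n * det L powr (1 / n) \<le> C0 * (S / G) * det L powr (1 / n)"
      using GS C0_pos by (intro mult_right_mono mult_left_mono) auto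
    ultimately show ?thesis by simp
  qed
  show ?thesis using A B C unfolding n_def by blast
qed

end
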